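(* Consider a dynamical system $\dot{x} = F(x)$, $x \in \mathbb{R}^n$, with $F$ locally Lipschitz, where the state is partitioned as $x = (x_1^T, x_2^T, \dots, x_m^T)^T$ with $x_i \in \mathbb{R}^{n_i}$ and $\sum_{i=1}^m n_i = n$. For each $i \in \{1,\dots,m\}$ let $v_i : \mathbb{R}^{n_i} \to \mathbb{R}$ be a continuously differentiable positive definite function (a Lyapunov function: $v_i(0)=0$ and $v_i(x_i) > 0$ for $x_i \neq 0$), and let $v(x) = (v_1(x_1), \dots, v_m(x_m))^T$. Let $\mathcal{D} \subseteq \mathbb{R}^n$ be a domain. Suppose there is a matrix $\tilde{A} = [\tilde{a}_{ij}] \in \mathbb{R}^{m \times m}$ with $\tilde{a}_{ij} \geq 0$ for all $i \neq j$ and $\sum_{j=1}^m \tilde{a}_{ij} < 0$ for all $i$, such that $$\dot{v}(x) \leq \tilde{A}\, v(x) \quad \text{(componentwise) for all } x \in \mathcal{D},$$ where $\dot{v}_i(x) = \nabla v_i(x_i)^T F_i(x)$ denotes the derivative of $v_i$ along the dynamics and $F_i$ is the block of $F$ corresponding to $x_i$. Define $V_i := v_i^2$ for each $i$ and $V(x) = (V_1(x_1), \dots, V_m(x_m))^T$. Then there exists a matrix $A = [a_{ij}] \in \mathbb{R}^{m\times m}$ such that $$\dot{V}(x) \leq A\, V(x) \quad \text{(componentwise) for all } x \in \mathcal{D},$$ with $a_{ij} \geq 0$ for all $i \neq j$ and $\sum_{j=1}^m a_{ij} < \sum_{j=1}^m \tilde{a}_{ij} < 0$ for all $i$.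
   Context: Inequalities between vectors are understood componentwise. $\nabla v_i$ denotes the gradient of $v_i$ with respect to $x_i$, and $\dot{V}_i(x) = \nabla V_i(x_i)^T F_i(x)$ is the derivative of $V_i$ along trajectories of $\dot{x}=F(x)$. *)

theory Defs
  imports "HOL-Analysis.Analysis"
begin

text \<open>State space R^n = real^'n; blocks indexed by the finite type 'm via blk :: 'n => 'm
  (coordinate k belongs to block blk k). The block x_i is represented inside R^n as the
  vector keeping the coordinates of block i and zeroing the others.\<close>

definition blockproj :: "('n::finite \<Rightarrow> 'm) \<Rightarrow> 'm \<Rightarrow> real^'n \<Rightarrow> real^'n" where
  "blockproj blk i x = (\<chi> k. if blk k = i then x $ k else 0)"

definition locally_lipschitz :: "(real^'n::finite \<Rightarrow> real^'n) \<Rightarrow> bool" where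
  "locally_lipschitz F \<longleftrightarrow> (\<forall>x. \<exists>e>0. \<exists>L. L-lipschitz_on (cball x e) F)"

definition C1_fun :: "(real^'n::finite \<Rightarrow> real) \<Rightarrow> bool" where
  "C1_fun f \<longleftrightarrow> (\<exists>f'. (\<forall>y. (f has_derivative blinfun_apply (f' y)) (at y)) \<and> continuous_on UNIV f')"

definition orbital_deriv ::
  "('n::finite \<Rightarrow> 'm) \<Rightarrow> (real^'n \<Rightarrow> real^'n) \<Rightarrow> 'm \<Rightarrow> (real^'n \<Rightarrow> real) \<Rightarrow> real^'n \<Rightarrow> real" where
  "orbital_deriv blk F i w x =
     frechet_derivative w (at (blockproj blk i x)) (blockproj blk i (F x))"

end

theory Submission
  imports Defs
begin

lemma blockproj_idem: "blockproj blk i (blockproj blk i x) = blockproj blk i x"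
  by (simp add: blockproj_def vec_eq_iff)

lemma key_ineq:
  fixes a :: "'m::finite \<Rightarrow> real" and w :: "'m \<Rightarrow> real"
  assumes off: "\<And>j. j \<noteq> i \<Longrightarrow> a j \<ge> 0" and wn: "\<And>j. w j \<ge> 0"
  shows "2 * w i * (\<Sum>j\<in>UNIV. a j * w j) \<le>
    (\<Sum>j\<in>UNIV. (if j = i then 2 * a i + (\<Sum>k\<in>UNIV-{i}. a k) else a j) * (w j)^2)"
proof -
  have "2 * w i * (\<Sum>j\<in>UNIV. a j * w j) = 2 * a i * (w i)^2 + (\<Sum>j\<in>UNIV-{i}. 2 * a j * w i * w j)"
    by (simp add: sum.remove[of UNIV i] sum_distrib_left algebra_simps power2_eq_square)
  also have "\<dots> \<le> 2 * a i * (w i)^2 + (\<Sum>j\<in>UNIV-{i}. a j * (w i)^2 + a j * (w j)^2)"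
  proof -
    have "2 * a j * w i * w j \<le> a j * (w i)^2 + a j * (w j)^2" if "j \<in> UNIV - {i}" for j
    proof -
      have "0 \<le> a j * (w i - w j)^2" using off[of j] that by simp
      thus ?thesis by (simp add: power2_eq_square algebra_simps)
    qed
    thus ?thesis by (intro add_left_mono sum_mono) auto
  qed
  also have "\<dots> = (\<Sum>j\<in>UNIV. (if j = i then 2 * a i + (\<Sum>k\<in>UNIV-{i}. a k) else a j) * (w j)^2)"
    by (simp add: sum.remove[of UNIV i] sum.distrib sum_distrib_right[symmetric] algebra_simps)
  finally show ?thesis .
qed

theorem lemma2:
  fixes F :: "real^'n \<Rightarrow> real^'n"
    and blk :: "'n \<Rightarrow> 'm::finite"
    and v :: "'m \<Rightarrow> real^'n \<Rightarrow> real"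
    and D :: "(real^'n) set"
    and At :: "real^'m^'m"
  assumes lip: "locally_lipschitz F"
    and blocks: "surj blk"
    and C1: "\<And>i. C1_fun (v i)"
    and v0: "\<And>i. v i 0 = 0"
    and vpos: "\<And>i y. blockproj blk i y = y \<Longrightarrow> y \<noteq> 0 \<Longrightarrow> v i y > 0"
    and dom: "open D" "connected D" "D \<noteq> {}"
    and offdiag: "\<And>i j. i \<noteq> j \<Longrightarrow> At $ i $ j \<ge> 0"
    and rowsum: "\<And>i. (\<Sum>j\<in>UNIV. At $ i $ j) < 0"
    and ineq: "\<And>x i. x \<in> D \<Longrightarrow>
        orbital_deriv blk F i (v i) x \<le> (At *v (\<chi> j. v j (blockproj blk j x))) $ i"
  shows "\<exists>A :: real^'m^'m.
     (\<forall>x\<in>D. \<forall>i. orbital_deriv blk F i (\<lambda>y. (v i y)^2) x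
                 \<le> (A *v (\<chi> j. (v j (blockproj blk j x))^2)) $ i)
   \<and> (\<forall>i j. i \<noteq> j \<longrightarrow> A $ i $ j \<ge> 0)
   \<and> (\<forall>i. (\<Sum>j\<in>UNIV. A $ i $ j) < (\<Sum>j\<in>UNIV. At $ i $ j)
          \<and> (\<Sum>j\<in>UNIV. At $ i $ j) < 0)"
proof -
  define A :: "real^'m^'m" where
    "A = (\<chi> i j. if j = i then 2 * At$i$i + (\<Sum>k\<in>UNIV-{i}. At$i$k) else At$i$j)"
  have wnn: "v j (blockproj blk j x) \<ge> 0" for j x
  proof (cases "blockproj blk j x = 0")
    case True thus ?thesis using v0 by simp
  next
    case False thus ?thesis using vpos[of j "blockproj blk j x"] blockproj_idem by force
  qed
  have der: "orbital_deriv blk F i (\<lambda>y. (v i y)^2) x =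
      2 * v i (blockproj blk i x) * orbital_deriv blk F i (v i) x" for i x
  proof -
    let ?p = "blockproj blk i x"
    obtain f' where f': "\<And>y. (v i has_derivative blinfun_apply (f' y)) (at y)"
      using C1[of i] unfolding C1_fun_def by blast
    have d: "(v i has_derivative frechet_derivative (v i) (at ?p)) (at ?p)"
      using f' frechet_derivative_works differentiable_def by blast
    have "((\<lambda>y. (v i y)^2) has_derivative
        (\<lambda>h. of_nat 2 * frechet_derivative (v i) (at ?p) h * v i ?p ^ (2 - 1))) (at ?p)"
      by (rule has_derivative_power[OF d])
    hence "(\<lambda>h. of_nat 2 * frechet_derivative (v i) (at ?p) h * v i ?p ^ (2 - 1))
        = frechet_derivative (\<lambda>y. (v i y)^2) (at ?p)"
      by (rule frechet_derivative_at)
    from fun_cong[OF this, of "blockproj blk i (F x)"] show ?thesis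
      unfolding orbital_deriv_def by (simp add: mult_ac)
  qed
  have main: "orbital_deriv blk F i (\<lambda>y. (v i y)^2) x
      \<le> (A *v (\<chi> j. (v j (blockproj blk j x))^2)) $ i" if "x \<in> D" for x i
  proof -
    let ?w = "\<lambda>j. v j (blockproj blk j x)"
    have "orbital_deriv blk F i (\<lambda>y. (v i y)^2) x = 2 * ?w i * orbital_deriv blk F i (v i) x"
      by (rule der)
    also have "\<dots> \<le> 2 * ?w i * (\<Sum>j\<in>UNIV. At$i$j * ?w j)"
      using ineq[OF that, of i] wnn[of i x] by (simp add: matrix_vector_mult_def mult_left_mono)
    also have "\<dots> \<le> (\<Sum>j\<in>UNIV. (if j = i then 2 * At$i$i + (\<Sum>k\<in>UNIV-{i}. At$i$k) else At$i$j) * (?w j)^2)"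
      by (rule key_ineq[where a="\<lambda>j. At$i$j"]) (auto intro: offdiag wnn)
    also have "\<dots> = (A *v (\<chi> j. (v j (blockproj blk j x))^2)) $ i"
      by (simp add: A_def matrix_vector_mult_def)
    finally show ?thesis .
  qed
  have rs: "(\<Sum>j\<in>UNIV. A $ i $ j) = 2 * (\<Sum>j\<in>UNIV. At $ i $ j)" for i
  proof -
    have "(\<Sum>j\<in>UNIV. A $ i $ j) = A$i$i + (\<Sum>j\<in>UNIV-{i}. A $ i $ j)"
      by (simp add: sum.remove[of UNIV i])
    also have "\<dots> = 2 * At$i$i + 2 * (\<Sum>j\<in>UNIV-{i}. At $ i $ j)"
      by (simp add: A_def)
    also have "\<dots> = 2 * (\<Sum>j\<in>UNIV. At $ i $ j)"
      by (simp add: sum.remove[of UNIV i])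
    finally show ?thesis .
  qed
  show ?thesis
    apply (rule exI[of _ A])
    using main rs rowsum offdiag by (auto simp: A_def)
qed

end
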